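(* Define $f:[0,1]\times[0,1]\to[0,1]$ by $$f(x,y)=\begin{cases} x, & \text{if } y\le \tfrac12 \text{ (and } x\in[0,1]\text{ arbitrary), or if } x\ge \tfrac12 \text{ (and } y\in[0,1]\text{ arbitrary)},\\ \tfrac12(2x)^{1+\varepsilon}, & \text{if } y=\tfrac12+\varepsilon \text{ with } \varepsilon>0 \text{ and } x\le\tfrac12.\end{cases}$$ Then $([0,1],f)$ is a topological quandle (with the standard topology on $[0,1]$).
   Context: A topological rack is a topological space $X$ with a map $f:X\times X\to X$ such that $f$ is continuous, for every $y\in X$ the right multiplication $R_y:X\to X$, $x\mapsto f(x,y)$, is a homeomorphism, and $f(f(x,y),z)=f(f(x,z),f(y,z))$ for all $x,y,z\in X$. A topological quandle is a topological rack which in addition satisfies $f(x,x)=x$ for all $x\in X$. *)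

theory Defs
  imports "HOL-Analysis.Analysis"
begin

definition topological_rack :: "'a topology \<Rightarrow> ('a \<Rightarrow> 'a \<Rightarrow> 'a) \<Rightarrow> bool" where
  "topological_rack X f \<longleftrightarrow>
     continuous_map (prod_topology X X) X (\<lambda>(x, y). f x y) \<and>
     (\<forall>y \<in> topspace X. homeomorphic_map X X (\<lambda>x. f x y)) \<and>
     (\<forall>x \<in> topspace X. \<forall>y \<in> topspace X. \<forall>z \<in> topspace X.
        f (f x y) z = f (f x z) (f y z))"

definition topological_quandle :: "'a topology \<Rightarrow> ('a \<Rightarrow> 'a \<Rightarrow> 'a) \<Rightarrow> bool" where
  "topological_quandle X f \<longleftrightarrow>
     topological_rack X f \<and> (\<forall>x \<in> topspace X. f x x = x)"

definition example_op :: "real \<Rightarrow> real \<Rightarrow> real" where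
  "example_op x y =
     (if y \<le> 1/2 \<or> x \<ge> 1/2 then x
      else (1/2) * (2 * x) powr (1 + (y - 1/2)))"

end

theory Submission
  imports Defs
begin

definition G :: "real \<Rightarrow> real \<Rightarrow> real" where
  "G a x = (if x \<le> 1/2 then (1/2) * (2 * x) powr a else x)"

definition cc :: "real \<Rightarrow> real" where
  "cc y = 1 + max 0 (y - 1/2)"

lemma cc_pos: "cc y > 0" unfolding cc_def by auto

lemma G_range:
  assumes "a > 0" "x \<in> {0..1}"
  shows "G a x \<in> {0..1}" "G a x \<le> 1/2 \<longleftrightarrow> x \<le> 1/2"
proof -
  have h: "x \<le> 1/2 \<Longrightarrow> (2*x) powr a \<le> 1"
    using assms by (intro powr_le1) auto
  show "G a x \<in> {0..1}" using assms h unfolding G_def by auto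
  show "G a x \<le> 1/2 \<longleftrightarrow> x \<le> 1/2" using assms h unfolding G_def by auto
qed

lemma G_comp:
  assumes "a > 0" "b > 0" "x \<in> {0..1}"
  shows "G a (G b x) = G (a*b) x"
proof (cases "x \<le> 1/2")
  case True
  have le: "G b x \<le> 1/2" using G_range[OF assms(2,3)] True by simp
  have "G a (G b x) = (1/2) * (2 * ((1/2) * (2 * x) powr b)) powr a"
    using le True unfolding G_def by simp
  also have "\<dots> = (1/2) * (2 * x) powr (a*b)"
    by (simp add: powr_powr mult.commute)
  finally show ?thesis using True unfolding G_def by simp
next
  case False
  then show ?thesis unfolding G_def by simp
qed

lemma G_one: "x \<in> {0..1} \<Longrightarrow> G 1 x = x"
  unfolding G_def by auto

lemma G_cont: "a > 0 \<Longrightarrow> continuous_on {0..1} (G a)"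
  unfolding G_def
  by (rule continuous_on_cases_le) (auto intro!: continuous_intros continuous_on_powr' simp: mult.commute)

lemma op_eq: "x \<in> {0..1} \<Longrightarrow> y \<in> {0..1} \<Longrightarrow> example_op x y = G (cc y) x"
  unfolding example_op_def G_def cc_def by (auto simp: mult.commute)

lemma cc_G: "a > 0 \<Longrightarrow> y \<in> {0..1} \<Longrightarrow> cc (G a y) = cc y"
proof (cases "y \<le> 1/2")
  case True
  assume "a > 0" "y \<in> {0..1}"
  then have "G a y \<le> 1/2" using G_range True by blast
  then show ?thesis using True unfolding cc_def by simp
next
  case False
  then show ?thesis unfolding G_def by simp
qed

lemma cont2: "continuous_on ({0..1} \<times> {0..1}) (\<lambda>(x, y). example_op x y)"
proof -
  have "continuous_on ({0..1} \<times> {0..1})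
     (\<lambda>p. if fst p \<le> (1/2::real) then (1/2) * (2 * fst p) powr (1 + max 0 (snd p - 1/2)) else fst p)"
    by (rule continuous_on_cases_le) (auto intro!: continuous_intros continuous_on_powr' simp: mult.commute)
  then show ?thesis
    by (rule continuous_on_eq) (auto simp: op_eq G_def cc_def)
qed

theorem mainTheorem1:
  shows "topological_quandle (subtopology euclidean {0..1::real}) example_op"
  unfolding topological_quandle_def topological_rack_def
proof (intro conjI ballI)
  show "continuous_map (prod_topology (top_of_set {0..1}) (top_of_set {0..1})) (top_of_set {0..1})
     (\<lambda>(x, y). example_op x y)"
    using cont2 G_range(1)[OF cc_pos] by (auto simp: op_eq)
next
  fix y :: real assume y: "y \<in> topspace (top_of_set {0..1})"
  then have y1: "y \<in> {0..1}" by simp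
  show "homeomorphic_map (top_of_set {0..1}) (top_of_set {0..1}) (\<lambda>x. example_op x y)"
    unfolding homeomorphic_map_maps homeomorphic_maps_def
  proof (intro exI conjI ballI)
    show "continuous_map (top_of_set {0..1}) (top_of_set {0..1}) (\<lambda>x. example_op x y)"
    proof -
      have "continuous_on {0..1} (\<lambda>x. example_op x y)"
        using G_cont[OF cc_pos, of y] by (rule continuous_on_eq) (use y1 in \<open>simp add: op_eq\<close>)
      then show ?thesis using G_range(1)[OF cc_pos _, of _ y] y1 by (auto simp: op_eq)
    qed
    show "continuous_map (top_of_set {0..1}) (top_of_set {0..1}) (G (1 / cc y))"
      using G_cont[of "1 / cc y"] cc_pos[of y] G_range(1)[of "1 / cc y"] by auto
    fix x assume "x \<in> topspace (top_of_set {0..1::real})"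
    then have x: "x \<in> {0..1}" by simp
    have p: "cc y > 0" "1 / cc y > 0" using cc_pos[of y] by auto
    show "G (1 / cc y) (example_op x y) = x"
      using x y1 p by (simp add: op_eq G_comp G_one)
    show "example_op (G (1 / cc y) x) y = x"
      using x y1 p G_range[OF p(2) x] by (simp add: op_eq G_comp G_one)
  qed
next
  fix x y z :: real
  assume "x \<in> topspace (top_of_set {0..1})" "y \<in> topspace (top_of_set {0..1})"
    "z \<in> topspace (top_of_set {0..1})"
  then have x: "x \<in> {0..1}" and y: "y \<in> {0..1}" and z: "z \<in> {0..1}" by auto
  show "example_op (example_op x y) z = example_op (example_op x z) (example_op y z)"
    using x y z cc_pos G_range cc_G[OF cc_pos y]
    by (simp add: op_eq G_comp mult.commute)
next
  fix x :: real assume "x \<in> topspace (top_of_set {0..1})"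
  then have x: "x \<in> {0..1}" by simp
  show "example_op x x = x"
  proof (cases "x \<le> 1/2")
    case True then show ?thesis using x by (simp add: op_eq cc_def G_one)
  next
    case False then show ?thesis by (simp add: example_op_def)
  qed
qed

end
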